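(* The sets $S^1_3$ and $T^1_3$ are finite, where $S^1_3=\{(k,a,b)\in(\mathbb{R}\setminus A_3)\times\mathbb{R}\times\mathbb{R}: \mathrm{rank}(A^{(k,a,b)}_3)\le1,\ 4a^3+27b^2=0\}\setminus\{(k,0,0):k\in\mathbb{R}\}$ and $T^1_3=\{(k,a,b)\in(\mathbb{R}\setminus C_3)\times\mathbb{R}\times\mathbb{R}: \mathrm{rank}(B^{(k,a,b)}_3)\le1,\ 4a^3+27b^2=0\}\setminus\{(k,0,0):k\in\mathbb{R}\}$.
   Context: For real $k,a,b$, the generalized $k$-FL sequence is $S^{(a,b)}_{k,0}=2b$, $S^{(a,b)}_{k,1}=bk+a$, $S^{(a,b)}_{k,n}=kS^{(a,b)}_{k,n-1}+S^{(a,b)}_{k,n-2}$. $A^{(k,a,b)}_3=\begin{pmatrix}S_1&S_2&S_3\\-S_3&S_1&S_2\\-S_2&-S_3&S_1\end{pmatrix}$ and $B^{(k,a,b)}_3=\begin{pmatrix}S_1&S_2&S_3\\S_3&S_1&S_2\\S_2&S_3&S_1\end{pmatrix}$ with $S_i=S^{(a,b)}_{k,i}$. Define $f_m,g_m\in\mathbb{Z}[T]$ by $f_0=0,f_1=1,g_0=2,g_1=T$, $f_m=Tf_{m-1}+f_{m-2}$, $g_m=Tg_{m-1}+g_{m-2}$; $F_n=f_{n+1}-f_n$, $G_n=g_{n+1}-g_n$, $P_n=f_{n+1}+f_n$, $Q_n=g_{n+1}+g_n$. $A_3=\{k: F_3(k)+1=0\text{ or }G_3(k)+k-2=0\}$ and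 $C_3=\{k: P_3(k)-1=0\text{ or }Q_3(k)-k-2=0\}$ (both contain $0$). The condition $4a^3+27b^2=0$ means the curve $y^2=x^3+ax+b$ is singular. *)

theory Defs
  imports "HOL-Analysis.Analysis"
begin

fun FLseq :: "real \<Rightarrow> real \<Rightarrow> real \<Rightarrow> nat \<Rightarrow> real" where
  "FLseq k a b 0 = 2 * b"
| "FLseq k a b (Suc 0) = b * k + a"
| "FLseq k a b (Suc (Suc n)) = k * FLseq k a b (Suc n) + FLseq k a b n"

fun fp :: "nat \<Rightarrow> int poly" where
  "fp 0 = 0"
| "fp (Suc 0) = 1"
| "fp (Suc (Suc m)) = [:0, 1:] * fp (Suc m) + fp m"

fun gp :: "nat \<Rightarrow> int poly" where
  "gp 0 = [:2:]"
| "gp (Suc 0) = [:0, 1:]"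
| "gp (Suc (Suc m)) = [:0, 1:] * gp (Suc m) + gp m"

definition Fp :: "nat \<Rightarrow> int poly" where "Fp n = fp (Suc n) - fp n"
definition Gp :: "nat \<Rightarrow> int poly" where "Gp n = gp (Suc n) - gp n"
definition Pp :: "nat \<Rightarrow> int poly" where "Pp n = fp (Suc n) + fp n"
definition Qp :: "nat \<Rightarrow> int poly" where "Qp n = gp (Suc n) + gp n"

definition evr :: "int poly \<Rightarrow> real \<Rightarrow> real" where
  "evr p x = poly (map_poly real_of_int p) x"

definition A3set :: "real set" where
  "A3set = {k. evr (Fp 3) k + 1 = 0 \<or> evr (Gp 3) k + k - 2 = 0}"

definition C3set :: "real set" where
  "C3set = {k. evr (Pp 3) k - 1 = 0 \<or> evr (Qp 3) k - k - 2 = 0}"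

definition mat3 :: "real \<Rightarrow> real \<Rightarrow> real \<Rightarrow> real \<Rightarrow> real \<Rightarrow> real \<Rightarrow> real \<Rightarrow> real \<Rightarrow> real
    \<Rightarrow> real^3^3" where
  "mat3 a11 a12 a13 a21 a22 a23 a31 a32 a33 =
     vector [vector [a11, a12, a13], vector [a21, a22, a23], vector [a31, a32, a33]]"

definition Amat3 :: "real \<Rightarrow> real \<Rightarrow> real \<Rightarrow> real^3^3" where
  "Amat3 k a b = (let S = FLseq k a b in
     mat3 (S 1) (S 2) (S 3)  (- S 3) (S 1) (S 2)  (- S 2) (- S 3) (S 1))"

definition Bmat3 :: "real \<Rightarrow> real \<Rightarrow> real \<Rightarrow> real^3^3" where
  "Bmat3 k a b = (let S = FLseq k a b in
     mat3 (S 1) (S 2) (S 3)  (S 3) (S 1) (S 2)  (S 2) (S 3) (S 1))"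

definition S13 :: "(real \<times> real \<times> real) set" where
  "S13 = {(k, a, b). k \<notin> A3set \<and> rank (Amat3 k a b) \<le> 1 \<and> 4 * a^3 + 27 * b^2 = 0}
          - {(k, 0, 0) | k. True}"

definition T13 :: "(real \<times> real \<times> real) set" where
  "T13 = {(k, a, b). k \<notin> C3set \<and> rank (Bmat3 k a b) \<le> 1 \<and> 4 * a^3 + 27 * b^2 = 0}
          - {(k, 0, 0) | k. True}"

end

theory Submission
  imports Defs
begin

lemma minor0:
  fixes M :: "real^'n^'m"
  assumes "rank M \<le> 1"
  shows "M$i$p * M$j$q - M$i$q * M$j$p = 0"
proof (rule ccontr)
  assume d: "M$i$p * M$j$q - M$i$q * M$j$p \<noteq> 0"
  have v0: "M$j \<noteq> 0" using d by auto
  have nsp: "M$i \<notin> span {M$j}"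
  proof
    assume "M$i \<in> span {M$j}"
    then obtain c where "M$i = c *\<^sub>R M$j" by (auto simp: span_singleton)
    then show False using d by (simp add: algebra_simps)
  qed
  have ne: "M$i \<noteq> M$j" using nsp by (metis span_base singletonI)
  have ind: "independent {M$i, M$j}"
    by (rule independent_insertI[OF nsp]) (use v0 in \<open>simp add: independent_insert\<close>)
  have "card {M$i, M$j} \<le> dim (rows M)"
    by (rule independent_card_le_dim[OF _ ind]) (auto simp: rows_def row_def)
  then have "2 \<le> rank M" using ne by (simp add: row_rank_def)
  then show False using assms by simp
qed

lemma A0: "(0::real) \<in> A3set"
  by (simp add: A3set_def evr_def Fp_def Gp_def numeral_eq_Suc poly_0_coeff_0 coeff_map_poly)
lemma C0: "(0::real) \<in> C3set"
  by (simp add: C3set_def evr_def Pp_def Qp_def numeral_eq_Suc poly_0_coeff_0 coeff_map_poly)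
lemma entA: "Amat3 k a b $ 1 $ 1 = FLseq k a b 1" "Amat3 k a b $ 1 $ 2 = FLseq k a b 2"
 "Amat3 k a b $ 1 $ 3 = FLseq k a b 3" "Amat3 k a b $ 2 $ 1 = - FLseq k a b 3"
 "Amat3 k a b $ 2 $ 2 = FLseq k a b 1" "Amat3 k a b $ 2 $ 3 = FLseq k a b 2"
  by (simp_all add: Amat3_def mat3_def Let_def del: FLseq.simps)

lemma cube: "x^3 = y^3 \<Longrightarrow> x = (y::real)"
  by (metis odd_real_root_power_cancel odd_numeral)
lemma algA:
  fixes x y z k a b :: real
  assumes hx: "x = b*k+a" and hy: "y = k*x+2*b" and hz: "z = k*y+x"
   and m1: "x*x - y*(-z) = 0" and m2: "x*y - z*(-z) = 0" and m3: "y*y - z*x = 0"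
  shows "k = 0 \<or> (a = 0 \<and> b = 0)"
proof (cases "x = 0")
  case True
  then have "y = 0" using m3 by simp
  then show ?thesis using True hx hy by simp
next
  case False
  have "x^3 = (-y)^3"
  proof -
    have "x^3 = x*(x*x)" by (simp add: power3_eq_cube)
    also have "\<dots> = x*(-(y*z))" using m1 by (metis add.commute add_eq_0_iff2 diff_minus_eq_add mult_minus_right)
    also have "\<dots> = -y*(x*z)" by (simp add: algebra_simps)
    also have "\<dots> = (-y)^3" using m3 by (simp add: power3_eq_cube algebra_simps)
    finally show ?thesis .
  qed
  then have y: "y = -x" using cube by force
  then have "x*x = x*z" using m1 by simp
  then have "z = x" using False by simp
  then have "k*x = 0" using hz y by simp
  then show ?thesis using False by simp
qed
lemma algB:
  fixes x y z k a b :: real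
  assumes hx: "x = b*k+a" and hy: "y = k*x+2*b" and hz: "z = k*y+x"
   and m1: "x*x - y*z = 0" and m2: "x*y - z*z = 0" and m3: "y*y - z*x = 0"
  shows "k = 0 \<or> (a = 0 \<and> b = 0)"
proof (cases "x = 0")
  case True
  then have "y = 0" using m3 by simp
  then show ?thesis using True hx hy by simp
next
  case False
  have "x^3 = y^3"
  proof -
    have "x^3 = x*(x*x)" by (simp add: power3_eq_cube)
    also have "\<dots> = y*(x*z)" using m1 by (simp add: algebra_simps)
    also have "\<dots> = y^3" using m3 by (simp add: power3_eq_cube algebra_simps)
    finally show ?thesis .
  qed
  then have y: "y = x" using cube by force
  then have "x*x = x*z" using m1 by simp
  then have "z = x" using False by simp
  then have "k*x = 0" using hz y by simp
  then show ?thesis using False by simp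
qed

lemma entB: "Bmat3 k a b $ 1 $ 1 = FLseq k a b 1" "Bmat3 k a b $ 1 $ 2 = FLseq k a b 2"
 "Bmat3 k a b $ 1 $ 3 = FLseq k a b 3" "Bmat3 k a b $ 2 $ 1 = FLseq k a b 3"
 "Bmat3 k a b $ 2 $ 2 = FLseq k a b 1" "Bmat3 k a b $ 2 $ 3 = FLseq k a b 2"
  by (simp_all add: Bmat3_def mat3_def Let_def del: FLseq.simps)

lemma FL123: "FLseq k a b 1 = b*k+a" "FLseq k a b 2 = k*FLseq k a b 1 + 2*b"
  "FLseq k a b 3 = k*FLseq k a b 2 + FLseq k a b 1"
  by (simp_all add: numeral_eq_Suc)

lemma S13_empty: "S13 = {}"
proof (rule ccontr)
  assume "S13 \<noteq> {}"
  then obtain k a b where mem: "(k,a,b) \<in> S13" by auto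
  then have kA: "k \<notin> A3set" and r: "rank (Amat3 k a b) \<le> 1" and nz: "\<not> (a = 0 \<and> b = 0)"
    by (auto simp: S13_def)
  have m1: "Amat3 k a b$1$1 * Amat3 k a b$2$2 - Amat3 k a b$1$2 * Amat3 k a b$2$1 = 0"
    by (rule minor0[OF r])
  have m2: "Amat3 k a b$1$1 * Amat3 k a b$2$3 - Amat3 k a b$1$3 * Amat3 k a b$2$1 = 0"
    by (rule minor0[OF r])
  have m3: "Amat3 k a b$1$2 * Amat3 k a b$2$3 - Amat3 k a b$1$3 * Amat3 k a b$2$2 = 0"
    by (rule minor0[OF r])
  have "k = 0 \<or> (a = 0 \<and> b = 0)"
    by (rule algA[OF FL123 m1[unfolded entA] m2[unfolded entA] m3[unfolded entA]])
  then show False using kA nz A0 by auto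
qed

lemma T13_empty: "T13 = {}"
proof (rule ccontr)
  assume "T13 \<noteq> {}"
  then obtain k a b where mem: "(k,a,b) \<in> T13" by auto
  then have kA: "k \<notin> C3set" and r: "rank (Bmat3 k a b) \<le> 1" and nz: "\<not> (a = 0 \<and> b = 0)"
    by (auto simp: T13_def)
  have m1: "Bmat3 k a b$1$1 * Bmat3 k a b$2$2 - Bmat3 k a b$1$2 * Bmat3 k a b$2$1 = 0"
    by (rule minor0[OF r])
  have m2: "Bmat3 k a b$1$1 * Bmat3 k a b$2$3 - Bmat3 k a b$1$3 * Bmat3 k a b$2$1 = 0"
    by (rule minor0[OF r])
  have m3: "Bmat3 k a b$1$2 * Bmat3 k a b$2$3 - Bmat3 k a b$1$3 * Bmat3 k a b$2$2 = 0"
    by (rule minor0[OF r])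
  have "k = 0 \<or> (a = 0 \<and> b = 0)"
    by (rule algB[OF FL123 m1[unfolded entB] m2[unfolded entB] m3[unfolded entB]])
  then show False using kA nz C0 by auto
qed

theorem lemma4p10:
  shows "finite S13 \<and> finite T13"
  by (simp add: S13_empty T13_empty)

end
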